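(* Let $A\ge\chi^2\rho^2$ and $\Delta t>0$. Let $(\phi^k)_{k\ge0}\subset\mathcal{C}_{\rm per}$ be grid functions with $0<\phi^k_{i,j}<1/\rho$ for all $k,i,j$, such that $\phi^1=\phi^0$ and, for every $k\ge1$, $\phi^{k+1}$ together with some $\mu^{k+1}\in\mathcal{C}_{\rm per}$ satisfies $$\frac{3\phi^{k+1}-4\phi^k+\phi^{k-1}}{2\Delta t}=\Delta_h\mu^{k+1},$$ $$\mu^{k+1}=S'(\phi^{k+1})+\kappa'(\phi^{k+1})\big(a_x((D_x\phi^{k+1})^2)+a_y((D_y\phi^{k+1})^2)\big)-2d_x(A_x\kappa(\phi^{k+1})D_x\phi^{k+1})-2d_y(A_y\kappa(\phi^{k+1})D_y\phi^{k+1})+H'(2\phi^k-\phi^{k-1})-A\Delta t\,\Delta_h(\phi^{k+1}-\phi^k).$$ For $n\ge1$ define the modified discrete energy $$E_h(\phi^{n+1},\phi^n):=F(\phi^{n+1})+\frac{1}{4\Delta t}\|\phi^{n+1}-\phi^n\|_{-1,h}^2+\chi\rho\|\phi^{n+1}-\phi^n\|_2^2.$$ Then for every $n\ge1$, $$E_h(\phi^{n+1},\phi^n)+\Delta t\Big(1-\frac{\chi^2\rho^2}{A}\Big)\Big\|\frac{\phi^{n+1}-\phi^n}{\Delta t}\Big\|_{-1,h}^2\le E_h(\phi^n,\phi^{n-1}).$$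
   Context: Parameters: $N_1,N_2,\chi>0$, $\alpha=\pi(\sqrt{N_2/\pi}+N_1/2)^2$, $\beta=\alpha/\sqrt{\pi N_2}$, $\tau=\sqrt{\pi N_2}N_1$, $\rho=1+N_2/\tau$. $S(\phi)=\frac{\phi}{\tau}\ln\frac{\alpha\phi}{\tau}+\frac{\phi}{N_1}\ln\frac{\beta\phi}{\tau}+(1-\rho\phi)\ln(1-\rho\phi)$, $S'(\phi)=(\frac1\tau+\frac1{N_1})\ln\phi-\rho\ln(1-\rho\phi)$ (additive constants omitted), $H(\phi)=\chi\phi(1-\rho\phi)$, $H'(\phi)=-2\chi\rho\phi$, $\kappa(\phi)=\frac1{36\phi(1-\phi)}$, $\kappa'(\phi)=\frac{2\phi-1}{36\phi^2(1-\phi)^2}$. Grid: $\Omega=(0,L)^2$, $h=L/N$, $\mathcal{C}_{\rm per}$ = $N$-periodic cell-centered grid functions. $D_x\nu_{i+1/2,j}=(\nu_{i+1,j}-\nu_{i,j})/h$, $A_x\nu_{i+1/2,j}=(\nu_{i+1,j}+\nu_{i,j})/2$; for edge functions $a_xf_{i,j}=(f_{i+1/2,j}+f_{i-1/2,j})/2$, $d_xf_{i,j}=(f_{i+1/2,j}-f_{i-1/2,j})/h$; analogously in $y$; $\Delta_h=d_xD_x+d_yD_y$. Inner product $(\nu,\xi)=h^2\sum_{i,j=1}^N\nu_{i,j}\xi_{i,j}$, $\|\nu\|_2^2=(\nu,\nu)$. For $\nu$ with zero mean, $\|\nu\|_{-1,h}^2=(\nu,(-\Delta_h)^{-1}\nu)$,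 with $(-\Delta_h)^{-1}\nu$ the unique zero-mean solution $\psi$ of $-\Delta_h\psi=\nu$. Discrete energy $F(\phi)=h^2\sum_{i,j=1}^N\big(S(\phi_{i,j})+H(\phi_{i,j})+\kappa(\phi_{i,j})(a_x((D_x\phi)^2)_{i,j}+a_y((D_y\phi)^2)_{i,j})\big)$. (The scheme conserves mass, so $\phi^{n+1}-\phi^n$ has zero mean.) *)

theory Defs
  imports Complex_Main
begin

definition alpha :: "real \<Rightarrow> real \<Rightarrow> real" where
  "alpha N1 N2 = pi * (sqrt (N2 / pi) + N1 / 2)^2"
definition beta :: "real \<Rightarrow> real \<Rightarrow> real" where
  "beta N1 N2 = alpha N1 N2 / sqrt (pi * N2)"
definition tau :: "real \<Rightarrow> real \<Rightarrow> real" where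
  "tau N1 N2 = sqrt (pi * N2) * N1"
definition rho :: "real \<Rightarrow> real \<Rightarrow> real" where
  "rho N1 N2 = 1 + N2 / tau N1 N2"

definition Sfun :: "real \<Rightarrow> real \<Rightarrow> real \<Rightarrow> real" where
  "Sfun N1 N2 p =
     p / tau N1 N2 * ln (alpha N1 N2 * p / tau N1 N2)
   + p / N1 * ln (beta N1 N2 * p / tau N1 N2)
   + (1 - rho N1 N2 * p) * ln (1 - rho N1 N2 * p)"

text \<open>Derivative of S with additive constants omitted (as in the paper).\<close>
definition dSfun :: "real \<Rightarrow> real \<Rightarrow> real \<Rightarrow> real" where
  "dSfun N1 N2 p = (1 / tau N1 N2 + 1 / N1) * ln p - rho N1 N2 * ln (1 - rho N1 N2 * p)"

definition Hfun :: "real \<Rightarrow> real \<Rightarrow> real \<Rightarrow> real \<Rightarrow> real" where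
  "Hfun N1 N2 chi p = chi * p * (1 - rho N1 N2 * p)"
definition dHfun :: "real \<Rightarrow> real \<Rightarrow> real \<Rightarrow> real \<Rightarrow> real" where
  "dHfun N1 N2 chi p = - 2 * chi * rho N1 N2 * p"

definition kap :: "real \<Rightarrow> real" where
  "kap p = 1 / (36 * p * (1 - p))"
definition dkap :: "real \<Rightarrow> real" where
  "dkap p = (2 * p - 1) / (36 * p^2 * (1 - p)^2)"

text \<open>An edge function \<open>f\<close> in x-direction stores
  \<open>f_{i+1/2,j}\<close> as \<open>f i j\<close> (similarly in y-direction, \<open>f_{i,j+1/2}\<close> as \<open>f i j\<close>).\<close>

type_synonym grid = "int \<Rightarrow> int \<Rightarrow> real"

definition per :: "nat \<Rightarrow> grid \<Rightarrow> bool" where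
  "per N f \<longleftrightarrow> (\<forall>i j. f (i + int N) j = f i j \<and> f i (j + int N) = f i j)"

definition Dx :: "real \<Rightarrow> grid \<Rightarrow> grid" where
  "Dx h v i j = (v (i+1) j - v i j) / h"
definition Dy :: "real \<Rightarrow> grid \<Rightarrow> grid" where
  "Dy h v i j = (v i (j+1) - v i j) / h"
definition Ax :: "grid \<Rightarrow> grid" where
  "Ax v i j = (v (i+1) j + v i j) / 2"
definition Ay :: "grid \<Rightarrow> grid" where
  "Ay v i j = (v i (j+1) + v i j) / 2"
definition ax :: "grid \<Rightarrow> grid" where
  "ax f i j = (f i j + f (i-1) j) / 2"
definition ay :: "grid \<Rightarrow> grid" where
  "ay f i j = (f i j + f i (j-1)) / 2"
definition dx :: "real \<Rightarrow> grid \<Rightarrow> grid" where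
  "dx h f i j = (f i j - f (i-1) j) / h"
definition dy :: "real \<Rightarrow> grid \<Rightarrow> grid" where
  "dy h f i j = (f i j - f i (j-1)) / h"

definition lap :: "real \<Rightarrow> grid \<Rightarrow> grid" where
  "lap h v i j = dx h (Dx h v) i j + dy h (Dy h v) i j"

definition gsum :: "nat \<Rightarrow> grid \<Rightarrow> real" where
  "gsum N v = (\<Sum>i\<in>{1..int N}. \<Sum>j\<in>{1..int N}. v i j)"

definition ip :: "nat \<Rightarrow> real \<Rightarrow> grid \<Rightarrow> grid \<Rightarrow> real" where
  "ip N h u v = h^2 * gsum N (\<lambda>i j. u i j * v i j)"

definition norm2sq :: "nat \<Rightarrow> real \<Rightarrow> grid \<Rightarrow> real" where
  "norm2sq N h v = ip N h v v"

definition invlap :: "nat \<Rightarrow> real \<Rightarrow> grid \<Rightarrow> grid" where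
  "invlap N h v = (THE psi. per N psi \<and> gsum N psi = 0 \<and> (\<forall>i j. - lap h psi i j = v i j))"

definition normm1sq :: "nat \<Rightarrow> real \<Rightarrow> grid \<Rightarrow> real" where
  "normm1sq N h v = ip N h v (invlap N h v)"

definition Fen :: "real \<Rightarrow> real \<Rightarrow> real \<Rightarrow> nat \<Rightarrow> real \<Rightarrow> grid \<Rightarrow> real" where
  "Fen N1 N2 chi N h p = h^2 * gsum N (\<lambda>i j.
      Sfun N1 N2 (p i j) + Hfun N1 N2 chi (p i j)
      + kap (p i j) * (ax (\<lambda>a b. (Dx h p a b)^2) i j + ay (\<lambda>a b. (Dy h p a b)^2) i j))"

definition Eh :: "real \<Rightarrow> real \<Rightarrow> real \<Rightarrow> nat \<Rightarrow> real \<Rightarrow> real \<Rightarrow> grid \<Rightarrow> grid \<Rightarrow> real" where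
  "Eh N1 N2 chi N h dt p q =
     Fen N1 N2 chi N h p + 1 / (4 * dt) * normm1sq N h (\<lambda>i j. p i j - q i j)
     + chi * rho N1 N2 * norm2sq N h (\<lambda>i j. p i j - q i j)"

end

theory Submission
  imports Defs
begin

lemma per_add[intro]: "per N f \<Longrightarrow> per N g \<Longrightarrow> per N (\<lambda>i j. f i j + g i j)"
  by (simp add: per_def)
lemma per_diff[intro]: "per N f \<Longrightarrow> per N g \<Longrightarrow> per N (\<lambda>i j. f i j - g i j)"
  by (simp add: per_def)
lemma per_mult[intro]: "per N f \<Longrightarrow> per N g \<Longrightarrow> per N (\<lambda>i j. f i j * g i j)"
  by (simp add: per_def)
lemma per_const[intro]: "per N (\<lambda>i j. c)"
  by (simp add: per_def)
lemma per_comp: "per N f \<Longrightarrow> per N (\<lambda>i j. F (f i j))"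
  by (simp add: per_def)
lemma per_shl: "per N f \<Longrightarrow> per N (\<lambda>i j. f (i - 1) j)"
  unfolding per_def by (metis add.commute diff_add_eq)
lemma per_shr: "per N f \<Longrightarrow> per N (\<lambda>i j. f (i + 1) j)"
  unfolding per_def by (metis add.commute add.assoc)
lemma per_shd: "per N f \<Longrightarrow> per N (\<lambda>i j. f i (j - 1))"
  unfolding per_def by (metis add.commute diff_add_eq)
lemma per_shu: "per N f \<Longrightarrow> per N (\<lambda>i j. f i (j + 1))"
  unfolding per_def by (metis add.commute add.assoc)
lemma per_Dx[intro]: "per N f \<Longrightarrow> per N (Dx h f)"
  using per_shr[of N f] unfolding per_def Dx_def by simp
lemma per_Dy[intro]: "per N f \<Longrightarrow> per N (Dy h f)"
  using per_shu[of N f] unfolding per_def Dy_def by simp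
lemma per_Ax[intro]: "per N f \<Longrightarrow> per N (Ax f)"
  using per_shr[of N f] unfolding per_def Ax_def by simp
lemma per_Ay[intro]: "per N f \<Longrightarrow> per N (Ay f)"
  using per_shu[of N f] unfolding per_def Ay_def by simp
lemma per_ax[intro]: "per N f \<Longrightarrow> per N (ax f)"
  using per_shl[of N f] unfolding per_def ax_def by simp
lemma per_ay[intro]: "per N f \<Longrightarrow> per N (ay f)"
  using per_shd[of N f] unfolding per_def ay_def by simp
lemma per_dx[intro]: "per N f \<Longrightarrow> per N (dx h f)"
  using per_shl[of N f] unfolding per_def dx_def by simp
lemma per_dy[intro]: "per N f \<Longrightarrow> per N (dy h f)"
  using per_shd[of N f] unfolding per_def dy_def by simp
lemma per_lap[intro]: "per N f \<Longrightarrow> per N (lap h f)"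
proof -
  assume "per N f"
  then have "per N (dx h (Dx h f))" "per N (dy h (Dy h f))" by auto
  then show ?thesis unfolding lap_def using per_add by blast
qed

lemma gsum_add: "gsum N (\<lambda>i j. f i j + g i j) = gsum N f + gsum N g"
  by (simp add: gsum_def sum.distrib)
lemma gsum_diff: "gsum N (\<lambda>i j. f i j - g i j) = gsum N f - gsum N g"
  by (simp add: gsum_def sum_subtractf)
lemma gsum_cmult: "gsum N (\<lambda>i j. c * f i j) = c * gsum N f"
  by (simp add: gsum_def sum_distrib_left)
lemma gsum_div: "gsum N (\<lambda>i j. f i j / c) = gsum N f / c"
  by (simp add: gsum_def sum_divide_distrib)
lemma gsum_uminus: "gsum N (\<lambda>i j. - f i j) = - gsum N f"
  by (simp add: gsum_def sum_negf)
lemma gsum_const: "gsum N (\<lambda>i j. c) = real N * real N * c"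
  by (simp add: gsum_def)
lemma gsum_mono: "(\<And>i j. f i j \<le> g i j) \<Longrightarrow> gsum N f \<le> gsum N g"
  by (simp add: gsum_def sum_mono)
lemma gsum_cong: "(\<And>i j. f i j = g i j) \<Longrightarrow> gsum N f = gsum N g"
  by (simp add: gsum_def)

lemma sum_shift1:
  fixes G :: "int \<Rightarrow> real"
  assumes "\<And>i. G (i + int N) = G i"
  shows "(\<Sum>i\<in>{1..int N}. G (i + 1)) = (\<Sum>i\<in>{1..int N}. G i)"
proof (cases "N = 0")
  case True then show ?thesis by simp
next
  case False
  have "(\<Sum>i\<in>{1..int N}. G (i + 1)) = (\<Sum>i\<in>{2..int N + 1}. G i)"
    using sum.reindex[of "\<lambda>i. i+1" "{1..int N}" G] False by (simp add: inj_on_def o_def)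
  also have "{2..int N + 1} = insert (int N + 1) {2..int N}" using False by auto
  also have "(\<Sum>i\<in>insert (int N + 1) {2..int N}. G i) = G (int N + 1) + (\<Sum>i\<in>{2..int N}. G i)"
    by simp
  also have "G (int N + 1) = G 1" using assms[of 1] by (simp add: add.commute)
  also have "{1..int N} = insert 1 {2..int N}" using False by auto
  then have "(\<Sum>i\<in>{1..int N}. G i) = G 1 + (\<Sum>i\<in>{2..int N}. G i)" by simp
  finally show ?thesis by simp
qed

lemma gsum_shiftx: "per N g \<Longrightarrow> gsum N (\<lambda>i j. g (i+1) j) = gsum N g"
  unfolding gsum_def
  apply (subst sum.swap) apply (subst (2) sum.swap)
  apply (rule sum.cong, simp)
  apply (rule sum_shift1) by (simp add: per_def)

lemma gsum_shifty: "per N g \<Longrightarrow> gsum N (\<lambda>i j. g i (j+1)) = gsum N g"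
  unfolding gsum_def
  apply (rule sum.cong, simp)
  apply (rule sum_shift1) by (simp add: per_def)

lemma shift_pair_x: assumes "per N f" "per N u"
  shows "gsum N (\<lambda>i j. f (i-1) j * u i j) = gsum N (\<lambda>i j. f i j * u (i+1) j)"
proof -
  have "per N (\<lambda>i j. f (i-1) j * u i j)" using assms per_shl per_mult by blast
  from gsum_shiftx[OF this] show ?thesis by simp
qed

lemma shift_pair_y: assumes "per N f" "per N u"
  shows "gsum N (\<lambda>i j. f i (j-1) * u i j) = gsum N (\<lambda>i j. f i j * u i (j+1))"
proof -
  have "per N (\<lambda>i j. f i (j-1) * u i j)" using assms per_shd per_mult by blast
  from gsum_shifty[OF this] show ?thesis by simp
qed

lemma sbp_dx: assumes "per N f" "per N u"
  shows "gsum N (\<lambda>i j. dx h f i j * u i j) = - gsum N (\<lambda>i j. f i j * Dx h u i j)"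
proof -
  have "gsum N (\<lambda>i j. dx h f i j * u i j) = gsum N (\<lambda>i j. (f i j * u i j - f (i-1) j * u i j) / h)"
    by (rule gsum_cong) (simp add: dx_def algebra_simps diff_divide_distrib)
  also have "\<dots> = (gsum N (\<lambda>i j. f i j * u i j) - gsum N (\<lambda>i j. f i j * u (i+1) j)) / h"
    by (simp add: gsum_div gsum_diff shift_pair_x[OF assms])
  also have "\<dots> = - gsum N (\<lambda>i j. (f i j * u (i+1) j - f i j * u i j) / h)"
    by (simp add: gsum_div gsum_diff diff_divide_distrib)
  also have "\<dots> = - gsum N (\<lambda>i j. f i j * Dx h u i j)"
    by (rule arg_cong[where f=uminus], rule gsum_cong) (simp add: Dx_def algebra_simps diff_divide_distrib)
  finally show ?thesis .
qed

lemma sbp_dy: assumes "per N f" "per N u"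
  shows "gsum N (\<lambda>i j. dy h f i j * u i j) = - gsum N (\<lambda>i j. f i j * Dy h u i j)"
proof -
  have "gsum N (\<lambda>i j. dy h f i j * u i j) = gsum N (\<lambda>i j. (f i j * u i j - f i (j-1) * u i j) / h)"
    by (rule gsum_cong) (simp add: dy_def algebra_simps diff_divide_distrib)
  also have "\<dots> = (gsum N (\<lambda>i j. f i j * u i j) - gsum N (\<lambda>i j. f i j * u i (j+1))) / h"
    by (simp add: gsum_div gsum_diff shift_pair_y[OF assms])
  also have "\<dots> = - gsum N (\<lambda>i j. (f i j * u i (j+1) - f i j * u i j) / h)"
    by (simp add: gsum_div gsum_diff diff_divide_distrib)
  also have "\<dots> = - gsum N (\<lambda>i j. f i j * Dy h u i j)"
    by (rule arg_cong[where f=uminus], rule gsum_cong) (simp add: Dy_def algebra_simps diff_divide_distrib)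
  finally show ?thesis .
qed

lemma sbp_ax: assumes "per N f" "per N u"
  shows "gsum N (\<lambda>i j. ax f i j * u i j) = gsum N (\<lambda>i j. f i j * Ax u i j)"
proof -
  have "gsum N (\<lambda>i j. ax f i j * u i j) = (gsum N (\<lambda>i j. f i j * u i j) + gsum N (\<lambda>i j. f (i-1) j * u i j)) / 2"
  proof -
    have "gsum N (\<lambda>i j. ax f i j * u i j) = gsum N (\<lambda>i j. (f i j * u i j + f (i-1) j * u i j) / 2)"
      by (rule gsum_cong) (simp add: ax_def algebra_simps add_divide_distrib)
    then show ?thesis by (simp add: gsum_div gsum_add)
  qed
  also have "\<dots> = (gsum N (\<lambda>i j. f i j * u i j) + gsum N (\<lambda>i j. f i j * u (i+1) j)) / 2"
    by (simp add: shift_pair_x[OF assms])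
  also have "\<dots> = gsum N (\<lambda>i j. f i j * Ax u i j)"
  proof -
    have "gsum N (\<lambda>i j. f i j * Ax u i j) = gsum N (\<lambda>i j. (f i j * u i j + f i j * u (i+1) j) / 2)"
      by (rule gsum_cong) (simp add: Ax_def algebra_simps add_divide_distrib)
    then show ?thesis by (simp add: gsum_div gsum_add)
  qed
  finally show ?thesis .
qed

lemma sbp_ay: assumes "per N f" "per N u"
  shows "gsum N (\<lambda>i j. ay f i j * u i j) = gsum N (\<lambda>i j. f i j * Ay u i j)"
proof -
  have "gsum N (\<lambda>i j. ay f i j * u i j) = (gsum N (\<lambda>i j. f i j * u i j) + gsum N (\<lambda>i j. f i (j-1) * u i j)) / 2"
  proof -
    have "gsum N (\<lambda>i j. ay f i j * u i j) = gsum N (\<lambda>i j. (f i j * u i j + f i (j-1) * u i j) / 2)"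
      by (rule gsum_cong) (simp add: ay_def algebra_simps add_divide_distrib)
    then show ?thesis by (simp add: gsum_div gsum_add)
  qed
  also have "\<dots> = (gsum N (\<lambda>i j. f i j * u i j) + gsum N (\<lambda>i j. f i j * u i (j+1))) / 2"
    by (simp add: shift_pair_y[OF assms])
  also have "\<dots> = gsum N (\<lambda>i j. f i j * Ay u i j)"
  proof -
    have "gsum N (\<lambda>i j. f i j * Ay u i j) = gsum N (\<lambda>i j. (f i j * u i j + f i j * u i (j+1)) / 2)"
      by (rule gsum_cong) (simp add: Ay_def algebra_simps add_divide_distrib)
    then show ?thesis by (simp add: gsum_div gsum_add)
  qed
  finally show ?thesis .
qed

lemma sbp_lap: assumes "per N u" "per N w"
  shows "gsum N (\<lambda>i j. lap h u i j * w i j) = - gsum N (\<lambda>i j. Dx h u i j * Dx h w i j + Dy h u i j * Dy h w i j)"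
proof -
  have "gsum N (\<lambda>i j. lap h u i j * w i j) = gsum N (\<lambda>i j. dx h (Dx h u) i j * w i j) + gsum N (\<lambda>i j. dy h (Dy h u) i j * w i j)"
    by (simp add: gsum_add[symmetric] lap_def algebra_simps)
  also have "\<dots> = - gsum N (\<lambda>i j. Dx h u i j * Dx h w i j) - gsum N (\<lambda>i j. Dy h u i j * Dy h w i j)"
    using sbp_dx[of N "Dx h u" w h] sbp_dy[of N "Dy h u" w h] assms per_Dx per_Dy by simp
  finally show ?thesis by (simp add: gsum_add)
qed

lemma params: assumes "N1 > 0" "N2 > 0"
  shows "tau N1 N2 > 0" "alpha N1 N2 > 0" "beta N1 N2 > 0" "rho N1 N2 > 1"
proof -
  show t: "tau N1 N2 > 0" using assms by (simp add: tau_def)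
  have "sqrt (N2/pi) + N1/2 > 0" using assms by (simp add: add_pos_pos)
  then show a: "alpha N1 N2 > 0" by (simp add: alpha_def)
  then show "beta N1 N2 > 0" using assms by (simp add: beta_def)
  show "rho N1 N2 > 1" using t assms by (simp add: rho_def)
qed

lemma xlnx_tangent: fixes x y :: real assumes "x > 0" "y > 0"
  shows "x * ln x - y * ln y \<le> (ln x + 1) * (x - y)"
proof -
  have "ln (x / y) \<le> x / y - 1" using assms by (intro ln_le_minus_one) simp
  then have "y * ln (x / y) \<le> y * (x / y - 1)" using assms by (simp add: mult_left_mono)
  also have "\<dots> = x - y" using assms by (simp add: field_simps)
  finally have "y * (ln x - ln y) \<le> x - y" using assms by (simp add: ln_div)
  then show ?thesis by (simp add: algebra_simps)
qed

definition cS :: "real \<Rightarrow> real \<Rightarrow> real" where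
  "cS N1 N2 = (1 / tau N1 N2) * (1 + ln (alpha N1 N2 / tau N1 N2))
     + (1 / N1) * (1 + ln (beta N1 N2 / tau N1 N2)) - rho N1 N2"

lemma S_tangent: assumes N1: "N1 > 0" and N2: "N2 > 0"
  and p: "0 < p" "rho N1 N2 * p < 1" and q: "0 < q" "rho N1 N2 * q < 1"
  shows "Sfun N1 N2 p - Sfun N1 N2 q \<le> (dSfun N1 N2 p + cS N1 N2) * (p - q)"
proof -
  note pr = params[OF N1 N2]
  define t a b r where "t = tau N1 N2" "a = alpha N1 N2" "b = beta N1 N2" "r = rho N1 N2"
  have t: "t > 0" "a > 0" "b > 0" "r > 1" using pr by (auto simp: t_a_b_r_def)
  have l1: "ln (a * x / t) = ln x + ln (a / t)" if "x > 0" for x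
  proof -
    show ?thesis using that t ln_mult[of x "a/t"] by (simp add: mult.commute)
  qed
  have l2: "ln (b * x / t) = ln x + ln (b / t)" if "x > 0" for x
  proof -
    show ?thesis using that t ln_mult[of x "b/t"] by (simp add: mult.commute)
  qed
  have Sx: "\<And>x. x > 0 \<Longrightarrow> Sfun N1 N2 x = (1/t + 1/N1) * (x * ln x) + (ln (a/t) / t + ln (b/t) / N1) * x
      + (1 - r * x) * ln (1 - r * x)"
    unfolding Sfun_def t_a_b_r_def[symmetric] using l1 l2 by (simp add: algebra_simps)
  have dS: "dSfun N1 N2 p + cS N1 N2 = (1/t + 1/N1) * (ln p + 1) + (ln (a/t) / t + ln (b/t) / N1)
      - r * (ln (1 - r * p) + 1)"
    unfolding dSfun_def cS_def t_a_b_r_def[symmetric] by (simp add: algebra_simps)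
  define K L up uq where "K = 1/t + 1/N1" "L = ln (a/t) / t + ln (b/t) / N1" "up = 1 - r*p" "uq = 1 - r*q"
  have upos: "up > 0" "uq > 0" using p q by (simp_all add: K_L_up_uq_def t_a_b_r_def)
  have Sp: "Sfun N1 N2 p = K*(p*ln p) + L*p + up * ln up" unfolding Sx[OF p(1)] K_L_up_uq_def by simp
  have Sq: "Sfun N1 N2 q = K*(q*ln q) + L*q + uq * ln uq" unfolding Sx[OF q(1)] K_L_up_uq_def by simp
  have dS': "dSfun N1 N2 p + cS N1 N2 = K*(ln p + 1) + L - r*(ln up + 1)" unfolding dS K_L_up_uq_def by simp
  have c1: "p * ln p - q * ln q \<le> (ln p + 1) * (p - q)" using p q xlnx_tangent by blast
  have c2: "up * ln up - uq * ln uq \<le> (ln up + 1) * (up - uq)" using upos xlnx_tangent by blast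
  have k: "K \<ge> 0" using t N1 by (simp add: K_L_up_uq_def)
  have c1': "K * (p * ln p - q * ln q) \<le> K * ((ln p + 1) * (p - q))"
    using mult_left_mono[OF c1 k] .
  have du: "up - uq = - (r * (p - q))" by (simp add: K_L_up_uq_def algebra_simps)
  have eL: "Sfun N1 N2 p - Sfun N1 N2 q = K * (p * ln p - q * ln q) + L*p - L*q + (up * ln up - uq * ln uq)"
    unfolding Sp Sq by (simp add: algebra_simps)
  have eR: "(dSfun N1 N2 p + cS N1 N2) * (p - q) = K * ((ln p + 1) * (p - q)) + L*p - L*q + (ln up + 1) * (up - uq)"
    unfolding dS' du by (simp add: algebra_simps)
  show ?thesis unfolding eL eR using c1' c2 by linarith
qed

lemma kap_tangent: assumes a: "0 < a" "a < 1" and b: "0 < b" "b < 1"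
  shows "kap a * d^2 - kap b * e^2 \<le> dkap a * (a - b) * d^2 + 2 * kap a * d * (d - e)"
proof -
  define f g where "f = 36 * a * (1 - a)" "g = 36 * b * (1 - b)"
  have fg: "f > 0" "g > 0" using a b by (auto simp: f_g_def)
  have conc: "g \<le> f + 36 * (1 - 2*a) * (b - a)"
  proof -
    have "f + 36 * (1 - 2*a) * (b - a) - g = 36 * (b - a)^2" by (simp add: f_g_def power2_eq_square algebra_simps)
    then show ?thesis by (smt (verit) zero_le_power2)
  qed
  have id1: "e^2 / g - (2*d*e/f - d^2*g/f^2) = (e*f - d*g)^2 / (g * f^2)"
    using fg by (simp add: field_simps power2_eq_square)
  have "(e*f - d*g)^2 / (g * f^2) \<ge> 0" using fg by simp
  then have i1: "e^2 / g \<ge> 2*d*e/f - d^2*g/f^2" using id1 by linarith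
  have ff: "f^2 = 36 * (36 * a^2 * (1-a)^2)" by (simp add: f_g_def power_mult_distrib)
  have dka: "dkap a = 36 * (2*a - 1) / f^2"
    unfolding ff dkap_def by (subst nonzero_mult_divide_mult_cancel_left) (simp_all add: mult.assoc)
  have m: "d^2*g/f^2 \<le> d^2 * (f + 36 * (1 - 2*a) * (b - a)) / f^2"
    using conc fg by (simp add: divide_right_mono mult_left_mono)
  have r: "d^2 * (f + 36 * (1 - 2*a) * (b - a)) / f^2 = d^2 / f - dkap a * (b - a) * d^2"
  proof -
    have "d^2 * (f + 36 * (1 - 2*a) * (b - a)) / f^2 = d^2 * f / f^2 + d^2 * (36 * (1 - 2*a) * (b - a)) / f^2"
      by (simp add: distrib_left add_divide_distrib)
    also have "d^2 * f / f^2 = d^2 / f" using fg by (simp add: power2_eq_square)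
    also have "d^2 * (36 * (1 - 2*a) * (b - a)) / f^2 = - (dkap a * (b - a) * d^2)"
      unfolding dka using fg by (simp add: field_simps)
    finally show ?thesis by simp
  qed
  have i2: "e^2 / g \<ge> 2*(d*e/f) - d^2 / f + dkap a * (b - a) * d^2" using i1 m r by simp
  have ka: "kap a = 1 / f" "kap b = 1 / g" by (simp_all add: kap_def f_g_def)
  have e1: "2 * (1/f) * d * (d - e) = 2*(d^2/f) - 2*(d*e/f)" using fg by (simp add: field_simps power2_eq_square)
  have e2: "dkap a * (a - b) * d^2 = - (dkap a * (b - a) * d^2)" by (simp add: algebra_simps)
  have e3: "kap a * d^2 = d^2/f" "kap b * e^2 = e^2/g" by (simp_all add: ka)
  have e1': "2 * kap a * d * (d - e) = 2*(d^2/f) - 2*(d*e/f)" using e1 ka by simp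
  show ?thesis unfolding e3 e1' e2 using i2 by linarith
qed

lemma per_intx: assumes "per N f" shows "f (i + int N * k) j = f i j"
proof (induction k rule: int_induct[where k=0])
  case base then show ?case by simp
next
  case (step1 m)
  have "f (i + int N * (m+1)) j = f ((i + int N * m) + int N) j" by (simp add: algebra_simps)
  also have "\<dots> = f (i + int N * m) j" using assms by (simp add: per_def)
  finally show ?case using step1 by simp
next
  case (step2 m)
  have "f (i + int N * m) j = f ((i + int N * (m - 1)) + int N) j" by (simp add: algebra_simps)
  also have "\<dots> = f (i + int N * (m-1)) j" using assms by (simp add: per_def)
  finally show ?case using step2 by simp
qed

lemma per_inty: assumes "per N f" shows "f i (j + int N * k) = f i j"
proof (induction k rule: int_induct[where k=0])
  case base then show ?case by simp
next
  case (step1 m)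
  have "f i (j + int N * (m+1)) = f i ((j + int N * m) + int N)" by (simp add: algebra_simps)
  also have "\<dots> = f i (j + int N * m)" using assms by (simp add: per_def)
  finally show ?case using step1 by simp
next
  case (step2 m)
  have "f i (j + int N * m) = f i ((j + int N * (m - 1)) + int N)" by (simp add: algebra_simps)
  also have "\<dots> = f i (j + int N * (m-1))" using assms by (simp add: per_def)
  finally show ?case using step2 by simp
qed

lemma per_range: assumes "per N f" "N > 0"
  shows "\<exists>i'\<in>{1..int N}. \<exists>j'\<in>{1..int N}. f i j = f i' j'"
proof -
  define i' j' where "i' = (i - 1) mod int N + 1" "j' = (j - 1) mod int N + 1"
  have Np: "int N > 0" using assms(2) by simp
  have r1: "i' \<in> {1..int N}"
    using pos_mod_bound[OF Np, of "i-1"] pos_mod_sign[OF Np, of "i-1"] unfolding i'_j'_def atLeastAtMost_iff by linarith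
  have r2: "j' \<in> {1..int N}"
    using pos_mod_bound[OF Np, of "j-1"] pos_mod_sign[OF Np, of "j-1"] unfolding i'_j'_def atLeastAtMost_iff by linarith
  note r = r1 r2
  have "i = i' + int N * ((i - 1) div int N)" "j = j' + int N * ((j - 1) div int N)"
    by (simp_all add: i'_j'_def algebra_simps)
  then have "f i j = f i' j'" using per_intx[OF assms(1)] per_inty[OF assms(1)] by metis
  with r show ?thesis by blast
qed

lemma gsum_zero_nonneg: assumes "\<And>i j. f i j \<ge> 0" "gsum N f = 0" "i \<in> {1..int N}" "j \<in> {1..int N}"
  shows "f i j = 0"
proof -
  have a: "\<forall>i\<in>{1..int N}. (\<Sum>j\<in>{1..int N}. f i j) = 0"
    using assms(2) unfolding gsum_def by (subst (asm) sum_nonneg_eq_0_iff) (auto intro: sum_nonneg assms(1))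
  then have "(\<Sum>j\<in>{1..int N}. f i j) = 0" using assms(3) by blast
  then show ?thesis using assms(1,4) by (subst (asm) sum_nonneg_eq_0_iff) auto
qed

lemma Dx_const: "Dx h (\<lambda>i j. c) = (\<lambda>i j. 0)" by (simp add: Dx_def fun_eq_iff)
lemma Dy_const: "Dy h (\<lambda>i j. c) = (\<lambda>i j. 0)" by (simp add: Dy_def fun_eq_iff)

lemma gsum_lap: assumes "per N u" shows "gsum N (lap h u) = 0"
proof -
  have "gsum N (lap h u) = gsum N (\<lambda>i j. lap h u i j * (\<lambda>i j. 1) i j)" by simp
  also have "\<dots> = 0" using sbp_lap[OF assms per_const, of h 1] by (simp add: Dx_const Dy_const gsum_def)
  finally show ?thesis .
qed

lemma lap_lin: "lap h (\<lambda>i j. a * f i j + b * g i j) i j = a * lap h f i j + b * lap h g i j"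
  by (simp add: lap_def dx_def dy_def Dx_def Dy_def divide_inverse algebra_simps)
lemma lap_minus_const: "lap h (\<lambda>i j. f i j - c) i j = lap h f i j"
  by (simp add: lap_def dx_def dy_def Dx_def Dy_def)
lemma lap_zero: "lap h (\<lambda>i j. 0) i j = 0"
  by (simp add: lap_def dx_def dy_def Dx_def Dy_def)
lemma lap_diff: "lap h (\<lambda>i j. f i j - g i j) i j = lap h f i j - lap h g i j"
  by (simp add: lap_def dx_def dy_def Dx_def Dy_def divide_inverse algebra_simps)
lemma lap_div: "lap h (\<lambda>i j. f i j / c) i j = lap h f i j / c"
  by (simp add: lap_def dx_def dy_def Dx_def Dy_def divide_inverse algebra_simps)

lemma const_from_shift:
  fixes w :: grid
  assumes "\<And>i j. w (i+1) j = w i j" "\<And>i j. w i (j+1) = w i j"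
  shows "w i j = w 0 0"
proof -
  have x: "w i j = w 0 j" for i j
  proof (induction i rule: int_induct[where k=0])
    case base then show ?case by simp
  next
    case (step1 m) then show ?case using assms(1)[of m j] by simp
  next
    case (step2 m) then show ?case using assms(1)[of "m-1" j] by simp
  qed
  have y: "w 0 j = w 0 0" for j
  proof (induction j rule: int_induct[where k=0])
    case base then show ?case by simp
  next
    case (step1 m) then show ?case using assms(2)[of 0 m] by simp
  next
    case (step2 m) then show ?case using assms(2)[of 0 "m-1"] by simp
  qed
  show ?thesis using x[of i j] y[of j] by simp
qed

lemma lap_uniq: assumes w: "per N w" and l: "\<And>i j. lap h w i j = 0" and s: "gsum N w = 0"
  and h: "h \<noteq> 0" and N: "N > 0"
  shows "w i j = 0"
proof -
  let ?E = "\<lambda>i j. Dx h w i j * Dx h w i j + Dy h w i j * Dy h w i j"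
  have "gsum N ?E = - gsum N (\<lambda>i j. lap h w i j * w i j)" using sbp_lap[OF w w, of h] by simp
  also have "\<dots> = 0" using l by (simp add: gsum_def)
  finally have E0: "gsum N ?E = 0" .
  have pE: "per N ?E" using w by (intro per_add per_mult per_Dx per_Dy)
  have Ez: "?E a b = 0" for a b
  proof -
    obtain a' b' where ab: "a' \<in> {1..int N}" "b' \<in> {1..int N}" "?E a b = ?E a' b'"
      using per_range[OF pE N, of a b] by blast
    have "?E a' b' = 0" by (rule gsum_zero_nonneg[OF _ E0 ab(1,2)]) simp
    then show ?thesis using ab(3) by simp
  qed
  have dx0: "w (a+1) b = w a b" for a b
  proof -
    have "Dx h w a b = 0" using Ez[of a b]
      by (metis add_nonneg_eq_0_iff mult_eq_0_iff zero_le_square)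
    then show ?thesis using h by (simp add: Dx_def)
  qed
  have dy0: "w a (b+1) = w a b" for a b
  proof -
    have "Dy h w a b = 0" using Ez[of a b]
      by (metis add_nonneg_eq_0_iff mult_eq_0_iff zero_le_square)
    then show ?thesis using h by (simp add: Dy_def)
  qed
  have c: "w a b = w 0 0" for a b using const_from_shift[of w] dx0 dy0 by blast
  have "gsum N w = gsum N (\<lambda>i j. w 0 0)" by (rule gsum_cong) (rule c)
  then have "gsum N w = real N * real N * w 0 0" by (simp add: gsum_const)
  then have "w 0 0 = 0" using s N by simp
  then show ?thesis using c by simp
qed

lemma invlap_char: assumes p: "per N psi" and v: "\<And>i j. - lap h psi i j = v i j"
  and h: "h \<noteq> 0" and N: "N > 0"
  shows "invlap N h v = (\<lambda>i j. psi i j - gsum N psi / (real N * real N))"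
proof -
  let ?c = "gsum N psi / (real N * real N)"
  let ?P = "\<lambda>ps. per N ps \<and> gsum N ps = 0 \<and> (\<forall>i j. - lap h ps i j = v i j)"
  have P: "?P (\<lambda>i j. psi i j - ?c)"
  proof (intro conjI allI)
    show "per N (\<lambda>i j. psi i j - ?c)" using p by (intro per_diff per_const)
    show "gsum N (\<lambda>i j. psi i j - ?c) = 0" using N by (simp add: gsum_diff gsum_const)
    fix i j show "- lap h (\<lambda>i j. psi i j - ?c) i j = v i j" using v by (simp add: lap_minus_const)
  qed
  have U: "ps = (\<lambda>i j. psi i j - ?c)" if "?P ps" for ps
  proof -
    let ?w = "\<lambda>i j. ps i j - (psi i j - ?c)"
    have "?w i j = 0" for i j
    proof (rule lap_uniq[OF _ _ _ h N])
      show "per N ?w" using that p by (intro per_diff per_const) auto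
      show "lap h ?w a b = 0" for a b using that P lap_diff[of h ps "\<lambda>i j. psi i j - ?c" a b]
        by (metis add.inverse_inverse diff_self)
      show "gsum N ?w = 0" using that P by (simp add: gsum_diff)
    qed
    then show ?thesis by (simp add: fun_eq_iff)
  qed
  show ?thesis unfolding invlap_def using P U by (rule the_equality)
qed

lemma normm1_char: assumes p: "per N psi" and v: "\<And>i j. - lap h psi i j = v i j"
  and h: "h \<noteq> 0" and N: "N > 0"
  shows "normm1sq N h v = h^2 * gsum N (\<lambda>i j. v i j * psi i j)"
proof -
  have vs: "gsum N v = 0"
  proof -
    have "gsum N v = gsum N (\<lambda>i j. - lap h psi i j)" by (rule gsum_cong) (simp add: v)
    then have "gsum N v = - gsum N (lap h psi)" by (simp add: gsum_uminus)
    then show ?thesis using gsum_lap[OF p] by simp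
  qed
  let ?c = "gsum N psi / (real N * real N)"
  have 1: "normm1sq N h v = h^2 * gsum N (\<lambda>i j. v i j * (psi i j - ?c))"
    unfolding normm1sq_def ip_def invlap_char[OF p v h N] by simp
  have 2: "gsum N (\<lambda>i j. v i j * (psi i j - ?c)) = gsum N (\<lambda>i j. v i j * psi i j - ?c * v i j)"
    by (rule gsum_cong) (simp add: algebra_simps)
  have 3: "gsum N (\<lambda>i j. v i j * psi i j - ?c * v i j) = gsum N (\<lambda>i j. v i j * psi i j)"
    by (simp only: gsum_diff gsum_cmult vs mult_zero_right diff_zero)
  show ?thesis using 1 2 3 by simp
qed

lemma aux: fixes k1 k2 l1 l2 g1 g2 d e :: real
  assumes t1: "k1 * d^2 - l1 * e^2 \<le> g1 * d^2 + 2 * k1 * d * (d - e)"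
    and t2: "k2 * d^2 - l2 * e^2 \<le> g2 * d^2 + 2 * k2 * d * (d - e)"
  shows "d^2 * ((g2 + g1) / 2) + 2 * ((k2 + k1) / 2 * d * (d - e)) \<ge> d^2 * ((k2 + k1) / 2) - e^2 * ((l2 + l1) / 2)"
proof -
  have e1: "d^2 * ((g2 + g1) / 2) + 2 * ((k2 + k1) / 2 * d * (d - e)) = ((g1 * d^2 + 2 * k1 * d * (d - e)) + (g2 * d^2 + 2 * k2 * d * (d - e)))/2"
    by (simp add: field_simps power2_eq_square)
  have e2: "d^2 * ((k2 + k1) / 2) - e^2 * ((l2 + l1) / 2) = ((k1 * d^2 - l1 * e^2) + (k2 * d^2 - l2 * e^2))/2"
    by (simp add: field_simps power2_eq_square)
  show ?thesis unfolding e1 e2 by (intro divide_right_mono add_mono t1 t2) simp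
qed

lemma point_edge:
  assumes a1: "0 < a1" "a1 < 1" and b1: "0 < b1" "b1 < 1"
    and a2: "0 < a2" "a2 < 1" and b2: "0 < b2" "b2 < 1"
  shows "d^2 * ((dkap a2 * (a2 - b2) + dkap a1 * (a1 - b1)) / 2) + 2 * ((kap a2 + kap a1) / 2 * d * (d - e))
      \<ge> d^2 * ((kap a2 + kap a1) / 2) - e^2 * ((kap b2 + kap b1) / 2)"
proof -
  have t1: "kap a1 * d^2 - kap b1 * e^2 \<le> dkap a1 * (a1 - b1) * d^2 + 2 * kap a1 * d * (d - e)"
    using kap_tangent[OF a1 b1] .
  have t2: "kap a2 * d^2 - kap b2 * e^2 \<le> dkap a2 * (a2 - b2) * d^2 + 2 * kap a2 * d * (d - e)"
    using kap_tangent[OF a2 b2] .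
  show ?thesis by (rule aux[OF t1 t2])
qed

lemma edge_x:
  assumes pp: "per N p" and pq: "per N q"
    and bp: "\<And>i j. 0 < p i j \<and> p i j < 1" and bq: "\<And>i j. 0 < q i j \<and> q i j < 1"
  shows "gsum N (\<lambda>i j. (Dx h p i j)^2 * Ax (\<lambda>a b. dkap (p a b) * (p a b - q a b)) i j)
       + 2 * gsum N (\<lambda>i j. Ax (\<lambda>c d. kap (p c d)) i j * Dx h p i j * Dx h (\<lambda>a b. p a b - q a b) i j)
       \<ge> gsum N (\<lambda>i j. (Dx h p i j)^2 * Ax (\<lambda>c d. kap (p c d)) i j)
         - gsum N (\<lambda>i j. (Dx h q i j)^2 * Ax (\<lambda>c d. kap (q c d)) i j)"
proof -
  have "gsum N (\<lambda>i j. (Dx h p i j)^2 * Ax (\<lambda>c d. kap (p c d)) i j - (Dx h q i j)^2 * Ax (\<lambda>c d. kap (q c d)) i j)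
     \<le> gsum N (\<lambda>i j. (Dx h p i j)^2 * Ax (\<lambda>a b. dkap (p a b) * (p a b - q a b)) i j
       + 2 * (Ax (\<lambda>c d. kap (p c d)) i j * Dx h p i j * Dx h (\<lambda>a b. p a b - q a b) i j))"
  proof (rule gsum_mono)
    fix i j
    have dd: "Dx h (\<lambda>a b. p a b - q a b) i j = Dx h p i j - Dx h q i j"
      by (simp add: Dx_def diff_divide_distrib)
    show "(Dx h p i j)^2 * Ax (\<lambda>c d. kap (p c d)) i j - (Dx h q i j)^2 * Ax (\<lambda>c d. kap (q c d)) i j
     \<le> (Dx h p i j)^2 * Ax (\<lambda>a b. dkap (p a b) * (p a b - q a b)) i j
       + 2 * (Ax (\<lambda>c d. kap (p c d)) i j * Dx h p i j * Dx h (\<lambda>a b. p a b - q a b) i j)"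
      unfolding dd Ax_def
      by (rule point_edge) (use bp bq in auto)
  qed
  then show ?thesis by (simp only: gsum_add gsum_diff gsum_cmult)
qed

lemma edge_y:
  assumes pp: "per N p" and pq: "per N q"
    and bp: "\<And>i j. 0 < p i j \<and> p i j < 1" and bq: "\<And>i j. 0 < q i j \<and> q i j < 1"
  shows "gsum N (\<lambda>i j. (Dy h p i j)^2 * Ay (\<lambda>a b. dkap (p a b) * (p a b - q a b)) i j)
       + 2 * gsum N (\<lambda>i j. Ay (\<lambda>c d. kap (p c d)) i j * Dy h p i j * Dy h (\<lambda>a b. p a b - q a b) i j)
       \<ge> gsum N (\<lambda>i j. (Dy h p i j)^2 * Ay (\<lambda>c d. kap (p c d)) i j)
         - gsum N (\<lambda>i j. (Dy h q i j)^2 * Ay (\<lambda>c d. kap (q c d)) i j)"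
proof -
  have "gsum N (\<lambda>i j. (Dy h p i j)^2 * Ay (\<lambda>c d. kap (p c d)) i j - (Dy h q i j)^2 * Ay (\<lambda>c d. kap (q c d)) i j)
     \<le> gsum N (\<lambda>i j. (Dy h p i j)^2 * Ay (\<lambda>a b. dkap (p a b) * (p a b - q a b)) i j
       + 2 * (Ay (\<lambda>c d. kap (p c d)) i j * Dy h p i j * Dy h (\<lambda>a b. p a b - q a b) i j))"
  proof (rule gsum_mono)
    fix i j
    have dd: "Dy h (\<lambda>a b. p a b - q a b) i j = Dy h p i j - Dy h q i j"
      by (simp add: Dy_def diff_divide_distrib)
    show "(Dy h p i j)^2 * Ay (\<lambda>c d. kap (p c d)) i j - (Dy h q i j)^2 * Ay (\<lambda>c d. kap (q c d)) i j
     \<le> (Dy h p i j)^2 * Ay (\<lambda>a b. dkap (p a b) * (p a b - q a b)) i j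
       + 2 * (Ay (\<lambda>c d. kap (p c d)) i j * Dy h p i j * Dy h (\<lambda>a b. p a b - q a b) i j)"
      unfolding dd Ay_def
      by (rule point_edge) (use bp bq in auto)
  qed
  then show ?thesis by (simp only: gsum_add gsum_diff gsum_cmult)
qed

lemma Fsplit: assumes pu: "per N u"
  shows "Fen N1 N2 chi N h u = h^2 * (gsum N (\<lambda>i j. Sfun N1 N2 (u i j) + Hfun N1 N2 chi (u i j))
     + gsum N (\<lambda>i j. (Dx h u i j)^2 * Ax (\<lambda>c d. kap (u c d)) i j)
     + gsum N (\<lambda>i j. (Dy h u i j)^2 * Ay (\<lambda>c d. kap (u c d)) i j))"
proof -
  have pX: "per N (\<lambda>a b. (Dx h u a b)^2)" using pu unfolding power2_eq_square by (intro per_mult per_Dx)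
  have pY: "per N (\<lambda>a b. (Dy h u a b)^2)" using pu unfolding power2_eq_square by (intro per_mult per_Dy)
  have pk: "per N (\<lambda>c d. kap (u c d))" using pu by (rule per_comp)
  have "Fen N1 N2 chi N h u = h^2 * (gsum N (\<lambda>i j. Sfun N1 N2 (u i j) + Hfun N1 N2 chi (u i j))
     + gsum N (\<lambda>i j. ax (\<lambda>a b. (Dx h u a b)^2) i j * kap (u i j))
     + gsum N (\<lambda>i j. ay (\<lambda>a b. (Dy h u a b)^2) i j * kap (u i j)))"
  proof -
    have "Fen N1 N2 chi N h u = h^2 * gsum N (\<lambda>i j. (Sfun N1 N2 (u i j) + Hfun N1 N2 chi (u i j))
      + ax (\<lambda>a b. (Dx h u a b)^2) i j * kap (u i j) + ay (\<lambda>a b. (Dy h u a b)^2) i j * kap (u i j))"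
      unfolding Fen_def by (rule arg_cong[where f="\<lambda>x. h^2 * x"], rule gsum_cong) (simp add: algebra_simps)
    then show ?thesis by (simp only: gsum_add)
  qed
  also note sbp_ax[OF pX pk]
  also note sbp_ay[OF pY pk]
  finally show ?thesis .
qed

lemma young: fixes K c x y :: real assumes "K > 0"
  shows "c * x * y \<le> K * y^2 + c^2 / K * x^2"
proof -
  have "0 \<le> (K*y - c*x)^2 / K" using assms by simp
  also have "(K*y - c*x)^2 / K = K * y^2 - 2 * (c*x*y) + c^2/K * x^2"
    using assms by (simp add: field_simps power2_eq_square)
  finally have "2 * (c*x*y) \<le> K * y^2 + c^2/K * x^2" by simp
  moreover have "0 \<le> K * y^2 + c^2/K * x^2" using assms by simp
  ultimately show ?thesis by linarith
qed

lemma final_arith: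
  fixes Fp Fq P P' X M M' D Md k A dt h2 :: real
  assumes dt: "dt > 0" and h2: "h2 > 0" and A: "A > 0"
    and e1: "Md = -(3*P - X)/(2*dt)"
    and e2: "2*X \<le> P + P'"
    and e3: "Fp - Fq - k*M' + A*dt*D \<le> Md"
    and e4: "k*M \<le> A*dt*D + k^2/(A*dt)*P"
  shows "h2*Fp + 1/(4*dt)*(h2*P) + k*(h2*M) + dt*(1 - k^2/A)*(h2*P/dt^2)
       \<le> h2*Fq + 1/(4*dt)*(h2*P') + k*(h2*M')"
proof -
  define a b x g where "a = P/dt" "b = P'/dt" "x = X/dt" "g = k^2/A"
  have f1: "Md = -(3/2)*a + (1/2)*x" using e1 dt by (simp add: a_b_x_g_def field_simps)
  have f2: "2*x \<le> a + b" using divide_right_mono[OF e2, of dt] dt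
    by (simp add: a_b_x_g_def add_divide_distrib)
  have f3: "k^2/(A*dt)*P = g*a" using dt A by (simp add: a_b_x_g_def)
  have core: "Fp + a/4 + k*M + (a - g*a) \<le> Fq + b/4 + k*M'" using f1 f2 f3 e3 e4 by linarith
  have l: "h2*Fp + 1/(4*dt)*(h2*P) + k*(h2*M) + dt*(1 - k^2/A)*(h2*P/dt^2) = h2 * (Fp + a/4 + k*M + (a - g*a))"
    using dt by (simp add: a_b_x_g_def field_simps power2_eq_square)
  have r: "h2*Fq + 1/(4*dt)*(h2*P') + k*(h2*M') = h2 * (Fq + b/4 + k*M')"
    using dt by (simp add: a_b_x_g_def field_simps)
  show ?thesis unfolding l r using core h2 by (simp add: mult_left_mono)
qed

lemma per_div[intro]: "per N f \<Longrightarrow> per N (\<lambda>i j. f i j / c)"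
  by (simp add: per_def)
lemma per_pow2[intro]: "per N f \<Longrightarrow> per N (\<lambda>i j. (f i j)^2)"
  by (simp add: per_def)

lemma T1_point:
  assumes N1: "N1 > 0" and N2: "N2 > 0" and chi: "chi \<ge> 0"
    and p: "0 < p" "rho N1 N2 * p < 1" and q: "0 < q" "rho N1 N2 * q < 1"
  shows "(dSfun N1 N2 p + dHfun N1 N2 chi (2*q - r)) * (p - q)
     \<ge> (Sfun N1 N2 p + Hfun N1 N2 chi p) - (Sfun N1 N2 q + Hfun N1 N2 chi q)
        - (cS N1 N2 + chi) * (p - q) - chi * rho N1 N2 * ((q - r) * (q - r))"
proof -
  have S: "Sfun N1 N2 p - Sfun N1 N2 q \<le> (dSfun N1 N2 p + cS N1 N2) * (p - q)"
    by (rule S_tangent[OF N1 N2 p q])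
  define k where "k = chi * rho N1 N2"
  have k: "k \<ge> 0" using chi params(4)[OF N1 N2] by (simp add: k_def)
  have H: "dHfun N1 N2 chi (2*q - r) * (p - q) = Hfun N1 N2 chi p - Hfun N1 N2 chi q - chi * (p - q)
      + k * ((p - q) * (p - q) - 2 * ((p - q) * (q - r)))"
    by (simp add: dHfun_def Hfun_def k_def algebra_simps)
  have sq: "k * ((p - q) * (p - q) - 2 * ((p - q) * (q - r))) = k * ((p - 2*q + r) * (p - 2*q + r)) - k * ((q - r) * (q - r))"
    by (simp add: algebra_simps)
  have nn: "0 \<le> k * ((p - 2*q + r) * (p - 2*q + r))" using k by simp
  have sp: "(dSfun N1 N2 p + dHfun N1 N2 chi (2*q - r)) * (p - q)
     = (dSfun N1 N2 p + cS N1 N2) * (p - q) - cS N1 N2 * (p - q) + dHfun N1 N2 chi (2*q - r) * (p - q)"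
    by (simp add: algebra_simps)
  have kk: "chi * rho N1 N2 * ((q - r) * (q - r)) = k * ((q - r) * (q - r))" by (simp add: k_def)
  have ce: "(cS N1 N2 + chi) * (p - q) = cS N1 N2 * (p - q) + chi * (p - q)" by (simp add: algebra_simps)
  show ?thesis unfolding sp kk ce using S H sq nn by linarith
qed

lemma pair_young: fixes a b c d :: real shows "2 * (a*b + c*d) \<le> (b*b + d*d) + (a*a + c*c)"
proof -
  have "(b*b + d*d) + (a*a + c*c) - 2 * (a*b + c*d) = (a-b)*(a-b) + (c-d)*(c-d)"
    by (simp add: algebra_simps)
  moreover have "0 \<le> (a-b)*(a-b) + (c-d)*(c-d)" by simp
  ultimately show ?thesis by linarith
qed

lemma pair_young2: fixes K k x y z w :: real assumes "K > 0"
  shows "k * (x*y + z*w) \<le> K * (y*y + w*w) + k^2/K * (x*x + z*z)"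
proof -
  have "k * x * y \<le> K * y^2 + k^2/K * x^2" by (rule young[OF assms])
  moreover have "k * z * w \<le> K * w^2 + k^2/K * z^2" by (rule young[OF assms])
  ultimately show ?thesis by (simp add: algebra_simps power2_eq_square)
qed

theorem theorem5p1:
  fixes N1 N2 chi L A dt :: real and N :: nat and h :: real
    and phi mu :: "nat \<Rightarrow> grid"
  assumes N1: "N1 > 0" and N2: "N2 > 0" and chi: "chi > 0"
    and L: "L > 0" and N: "N > 0" and h: "h = L / real N"
    and A: "A \<ge> chi^2 * (rho N1 N2)^2" and dt: "dt > 0"
    and per_phi: "\<And>k. per N (phi k)"
    and per_mu: "\<And>k. k \<ge> 1 \<Longrightarrow> per N (mu (k+1))"
    and bounds: "\<And>k i j. 0 < phi k i j \<and> phi k i j < 1 / rho N1 N2"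
    and init: "phi 1 = phi 0"
    and eq1: "\<And>k i j. k \<ge> 1 \<Longrightarrow>
        (3 * phi (k+1) i j - 4 * phi k i j + phi (k-1) i j) / (2 * dt) = lap h (mu (k+1)) i j"
    and eq2: "\<And>k i j. k \<ge> 1 \<Longrightarrow>
        mu (k+1) i j =
          dSfun N1 N2 (phi (k+1) i j)
          + dkap (phi (k+1) i j) * (ax (\<lambda>a b. (Dx h (phi (k+1)) a b)^2) i j
                                  + ay (\<lambda>a b. (Dy h (phi (k+1)) a b)^2) i j)
          - 2 * dx h (\<lambda>a b. Ax (\<lambda>c d. kap (phi (k+1) c d)) a b * Dx h (phi (k+1)) a b) i j
          - 2 * dy h (\<lambda>a b. Ay (\<lambda>c d. kap (phi (k+1) c d)) a b * Dy h (phi (k+1)) a b) i j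
          + dHfun N1 N2 chi (2 * phi k i j - phi (k-1) i j)
          - A * dt * lap h (\<lambda>a b. phi (k+1) a b - phi k a b) i j"
    and n: "n \<ge> 1"
  shows "Eh N1 N2 chi N h dt (phi (n+1)) (phi n)
         + dt * (1 - chi^2 * (rho N1 N2)^2 / A)
             * normm1sq N h (\<lambda>i j. (phi (n+1) i j - phi n i j) / dt)
         \<le> Eh N1 N2 chi N h dt (phi n) (phi (n-1))"
proof -
  have hpos: "h > 0" using h L N by simp
  have hne: "h \<noteq> 0" using hpos by simp
  note pr = params[OF N1 N2]
  have rpos: "rho N1 N2 > 0" using pr(4) by simp
  have bnd1: "0 < phi k i j \<and> phi k i j < 1" for k i j
  proof -
    have "1 / rho N1 N2 < 1" using pr(4) by simp
    then show ?thesis using bounds[of k i j] by linarith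
  qed
  have bnd2: "0 < phi k i j \<and> rho N1 N2 * phi k i j < 1" for k i j
    using bounds[of k i j] rpos by (simp add: pos_less_divide_eq mult.commute)
  have Apos: "A > 0"
  proof -
    have "chi^2 * (rho N1 N2)^2 > 0" using chi rpos by simp
    then show ?thesis using A by linarith
  qed
  define psi where "psi = rec_nat (\<lambda>i j. 0::real) (\<lambda>k ps i j. (1/3) * ps i j + (-(2*dt/3)) * mu (Suc (Suc k)) i j)"
  have psi0: "psi 0 = (\<lambda>i j. 0)" by (simp add: psi_def)
  have psiS: "psi (Suc k) = (\<lambda>i j. (1/3) * psi k i j + (-(2*dt/3)) * mu (Suc (Suc k)) i j)" for k
    by (simp add: psi_def)
  have PS: "per N (psi k) \<and> (\<forall>i j. - lap h (psi k) i j = phi (Suc k) i j - phi k i j)" for k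
  proof (induction k)
    case 0 show ?case using init by (simp add: psi0 lap_zero per_const)
  next
    case (Suc k)
    have pm: "per N (mu (Suc (Suc k)))" using per_mu[of "Suc k"] by simp
    have pp: "per N (psi (Suc k))" unfolding psiS using Suc.IH pm by (intro per_add per_mult per_const) auto
    have e1: "(3 * phi (Suc (Suc k)) i j - 4 * phi (Suc k) i j + phi k i j) / (2*dt) = lap h (mu (Suc (Suc k))) i j" for i j
      using eq1[of "Suc k" i j] by simp
    have "- lap h (psi (Suc k)) i j = phi (Suc (Suc k)) i j - phi (Suc k) i j" for i j
    proof -
      have "- lap h (psi (Suc k)) i j = (1/3) * (- lap h (psi k) i j) + (2*dt/3) * lap h (mu (Suc (Suc k))) i j"
        unfolding psiS lap_lin by simp
      also have "\<dots> = (1/3) * (phi (Suc k) i j - phi k i j) + (2*dt/3) * ((3 * phi (Suc (Suc k)) i j - 4 * phi (Suc k) i j + phi k i j) / (2*dt))"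
        using Suc.IH e1[of i j] by simp
      also have "\<dots> = phi (Suc (Suc k)) i j - phi (Suc k) i j" using dt by (simp add: field_simps)
      finally show ?thesis .
    qed
    then show ?case using pp by blast
  qed
  obtain m where nm: "n = Suc m" using n by (cases n) auto
  let ?p = "phi (Suc (Suc m))" and ?q = "phi (Suc m)" and ?r = "phi m"
  let ?ps = "psi (Suc m)" and ?ps' = "psi m" and ?mu = "mu (Suc (Suc m))"
  let ?d = "\<lambda>i j. ?p i j - ?q i j" and ?d' = "\<lambda>i j. ?q i j - ?r i j"
  have pp: "per N ?p" "per N ?q" "per N ?r" using per_phi by auto
  have pmu: "per N ?mu" using per_mu[of "Suc m"] by simp
  have pd: "per N ?d" "per N ?d'" using pp by auto
  have pps: "per N ?ps" "per N ?ps'" using PS by auto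
  have lps: "\<And>i j. - lap h ?ps i j = ?d i j" using PS[of "Suc m"] by auto
  have lps': "\<And>i j. - lap h ?ps' i j = ?d' i j" using PS[of m] by auto
  have one: "1 \<le> Suc m" by simp
  have s1: "Suc m + 1 = Suc (Suc m)" by simp
  have s2: "Suc m - 1 = m" by simp
  note E1 = eq1[of "Suc m", OF one, unfolded s1 s2]
  note E2 = eq2[of "Suc m", OF one, unfolded s1 s2]
  have bp: "\<And>i j. 0 < ?p i j \<and> ?p i j < 1" "\<And>i j. 0 < ?q i j \<and> ?q i j < 1" using bnd1 by auto
  let ?G = "\<lambda>u w. gsum N (\<lambda>i j. Dx h u i j * Dx h w i j + Dy h u i j * Dy h w i j)"
  have gsd: "gsum N ?d = 0"
  proof -
    have "gsum N ?d = gsum N (\<lambda>i j. - lap h ?ps i j)" by (rule gsum_cong) (simp add: lps)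
    then show ?thesis by (simp add: gsum_uminus gsum_lap[OF pps(1)])
  qed
  have n1: "normm1sq N h ?d = h^2 * gsum N (\<lambda>i j. ?d i j * ?ps i j)"
    by (rule normm1_char[OF pps(1) lps hne N])
  have n2: "normm1sq N h ?d' = h^2 * gsum N (\<lambda>i j. ?d' i j * ?ps' i j)"
    by (rule normm1_char[OF pps(2) lps' hne N])
  have n3: "normm1sq N h (\<lambda>i j. ?d i j / dt) = h^2 * (gsum N (\<lambda>i j. ?d i j * ?ps i j) / dt^2)"
  proof -
    have l3: "- lap h (\<lambda>i j. ?ps i j / dt) i j = ?d i j / dt" for i j
    proof -
      have "- lap h (\<lambda>i j. ?ps i j / dt) i j = (- lap h ?ps i j) / dt" by (simp add: lap_div)
      then show ?thesis by (simp only: lps)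
    qed
    have "normm1sq N h (\<lambda>i j. ?d i j / dt) = h^2 * gsum N (\<lambda>i j. ?d i j / dt * (?ps i j / dt))"
      by (rule normm1_char[OF per_div[OF pps(1)] l3 hne N])
    also have "gsum N (\<lambda>i j. ?d i j / dt * (?ps i j / dt)) = gsum N (\<lambda>i j. ?d i j * ?ps i j / dt^2)"
      by (rule gsum_cong) (simp add: power2_eq_square)
    finally show ?thesis by (simp add: gsum_div)
  qed
  have gP: "gsum N (\<lambda>i j. ?d i j * ?ps i j) = ?G ?ps ?ps"
  proof -
    have "gsum N (\<lambda>i j. ?d i j * ?ps i j) = gsum N (\<lambda>i j. - (lap h ?ps i j * ?ps i j))"
      by (rule gsum_cong) (simp add: lps[symmetric])
    then show ?thesis using sbp_lap[OF pps(1) pps(1), of h] by (simp add: gsum_uminus)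
  qed
  have gP': "gsum N (\<lambda>i j. ?d' i j * ?ps' i j) = ?G ?ps' ?ps'"
  proof -
    have "gsum N (\<lambda>i j. ?d' i j * ?ps' i j) = gsum N (\<lambda>i j. - (lap h ?ps' i j * ?ps' i j))"
      by (rule gsum_cong) (simp add: lps'[symmetric])
    then show ?thesis using sbp_lap[OF pps(2) pps(2), of h] by (simp add: gsum_uminus)
  qed
  have gX: "gsum N (\<lambda>i j. ?d' i j * ?ps i j) = ?G ?ps' ?ps"
  proof -
    have "gsum N (\<lambda>i j. ?d' i j * ?ps i j) = gsum N (\<lambda>i j. - (lap h ?ps' i j * ?ps i j))"
      by (rule gsum_cong) (simp add: lps'[symmetric])
    then show ?thesis using sbp_lap[OF pps(2) pps(1), of h] by (simp add: gsum_uminus)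
  qed
  have gM: "gsum N (\<lambda>i j. ?d i j * ?d i j) = ?G ?ps ?d"
  proof -
    have "gsum N (\<lambda>i j. ?d i j * ?d i j) = gsum N (\<lambda>i j. - (lap h ?ps i j * ?d i j))"
      by (rule gsum_cong) (simp add: lps[symmetric])
    then show ?thesis using sbp_lap[OF pps(1) pd(1), of h] by (simp add: gsum_uminus)
  qed
  have gMd: "gsum N (\<lambda>i j. ?mu i j * ?d i j) = ?G ?ps ?mu"
  proof -
    have "gsum N (\<lambda>i j. ?mu i j * ?d i j) = gsum N (\<lambda>i j. - (lap h ?ps i j * ?mu i j))"
      by (rule gsum_cong) (simp add: lps[symmetric])
    then show ?thesis using sbp_lap[OF pps(1) pmu, of h] by (simp add: gsum_uminus)
  qed
  have Gsym: "?G ?ps ?mu = ?G ?mu ?ps" by (rule gsum_cong) (simp add: mult.commute)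
  have gmu: "gsum N (\<lambda>i j. lap h ?mu i j * ?ps i j) = - ?G ?mu ?ps" by (rule sbp_lap[OF pmu pps(1)])
  have gmu2: "gsum N (\<lambda>i j. lap h ?mu i j * ?ps i j)
      = (3 * gsum N (\<lambda>i j. ?d i j * ?ps i j) - gsum N (\<lambda>i j. ?d' i j * ?ps i j)) / (2*dt)"
  proof -
    have "gsum N (\<lambda>i j. lap h ?mu i j * ?ps i j)
      = gsum N (\<lambda>i j. (3 * (?d i j * ?ps i j) - ?d' i j * ?ps i j) / (2*dt))"
      by (rule gsum_cong) (simp add: E1[symmetric] algebra_simps)
    then show ?thesis by (simp add: gsum_div gsum_diff gsum_cmult)
  qed
  define P where "P = gsum N (\<lambda>i j. ?d i j * ?ps i j)"
  define P' where "P' = gsum N (\<lambda>i j. ?d' i j * ?ps' i j)"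
  define X where "X = gsum N (\<lambda>i j. ?d' i j * ?ps i j)"
  define M where "M = gsum N (\<lambda>i j. ?d i j * ?d i j)"
  define M' where "M' = gsum N (\<lambda>i j. ?d' i j * ?d' i j)"
  define D where "D = ?G ?d ?d"
  define Md where "Md = gsum N (\<lambda>i j. ?mu i j * ?d i j)"
  define k where "k = chi * rho N1 N2"
  have e1: "Md = -(3*P - X)/(2*dt)"
  proof -
    have "Md = - gsum N (\<lambda>i j. lap h ?mu i j * ?ps i j)" unfolding Md_def gMd Gsym gmu by simp
    then show ?thesis unfolding gmu2 P_def X_def by (simp add: diff_divide_distrib)
  qed
  have e2: "2*X \<le> P + P'"
  proof -
    have "gsum N (\<lambda>i j. 2 * (Dx h ?ps' i j * Dx h ?ps i j + Dy h ?ps' i j * Dy h ?ps i j))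
      \<le> gsum N (\<lambda>i j. (Dx h ?ps i j * Dx h ?ps i j + Dy h ?ps i j * Dy h ?ps i j)
                     + (Dx h ?ps' i j * Dx h ?ps' i j + Dy h ?ps' i j * Dy h ?ps' i j))"
      by (rule gsum_mono) (rule pair_young)
    then show ?thesis unfolding X_def P_def P'_def gX gP gP' by (simp only: gsum_cmult gsum_add)
  qed
  have e4: "k*M \<le> A*dt*D + k^2/(A*dt)*P"
  proof -
    have K: "A*dt > 0" using Apos dt by simp
    have "gsum N (\<lambda>i j. k * (Dx h ?ps i j * Dx h ?d i j + Dy h ?ps i j * Dy h ?d i j))
      \<le> gsum N (\<lambda>i j. A*dt * (Dx h ?d i j * Dx h ?d i j + Dy h ?d i j * Dy h ?d i j)
                     + k^2/(A*dt) * (Dx h ?ps i j * Dx h ?ps i j + Dy h ?ps i j * Dy h ?ps i j))"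
      by (rule gsum_mono) (rule pair_young2[OF K])
    then show ?thesis unfolding M_def D_def P_def gM gP by (simp only: gsum_cmult gsum_add)
  qed
  let ?W = "\<lambda>a b. dkap (?p a b) * ?d a b"
  let ?Xp = "\<lambda>a b. (Dx h ?p a b)^2" and ?Yp = "\<lambda>a b. (Dy h ?p a b)^2"
  let ?FX = "\<lambda>a b. Ax (\<lambda>c d. kap (?p c d)) a b * Dx h ?p a b"
  let ?FY = "\<lambda>a b. Ay (\<lambda>c d. kap (?p c d)) a b * Dy h ?p a b"
  let ?T1 = "\<lambda>i j. (dSfun N1 N2 (?p i j) + dHfun N1 N2 chi (2 * ?q i j - ?r i j)) * ?d i j"
  have pW: "per N ?W" by (rule per_mult[OF per_comp[OF pp(1)] pd(1)])
  have pXp: "per N ?Xp" "per N ?Yp" by (rule per_pow2[OF per_Dx[OF pp(1)]], rule per_pow2[OF per_Dy[OF pp(1)]])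
  have pFX: "per N ?FX" "per N ?FY"
    by (rule per_mult[OF per_Ax[OF per_comp[OF pp(1)]] per_Dx[OF pp(1)]],
        rule per_mult[OF per_Ay[OF per_comp[OF pp(1)]] per_Dy[OF pp(1)]])
  have dec: "?mu i j * ?d i j = ?T1 i j + ax ?Xp i j * ?W i j + ay ?Yp i j * ?W i j
      + (-2) * (dx h ?FX i j * ?d i j) + (-2) * (dy h ?FY i j * ?d i j) + (-(A*dt)) * (lap h ?d i j * ?d i j)" for i j
    unfolding E2[of i j] by (simp add: algebra_simps)
  have Mdec: "Md = gsum N ?T1 + gsum N (\<lambda>i j. ax ?Xp i j * ?W i j) + gsum N (\<lambda>i j. ay ?Yp i j * ?W i j)
      + (-2) * gsum N (\<lambda>i j. dx h ?FX i j * ?d i j) + (-2) * gsum N (\<lambda>i j. dy h ?FY i j * ?d i j)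
      + (-(A*dt)) * gsum N (\<lambda>i j. lap h ?d i j * ?d i j)"
    unfolding Md_def by (simp only: gsum_cong[OF dec] gsum_add gsum_cmult)
  have Md2: "Md = gsum N ?T1 + (gsum N (\<lambda>i j. ?Xp i j * Ax ?W i j) + 2 * gsum N (\<lambda>i j. ?FX i j * Dx h ?d i j))
      + (gsum N (\<lambda>i j. ?Yp i j * Ay ?W i j) + 2 * gsum N (\<lambda>i j. ?FY i j * Dy h ?d i j)) + A*dt*D"
    unfolding Mdec sbp_ax[OF pXp(1) pW] sbp_ay[OF pXp(2) pW] sbp_dx[OF pFX(1) pd(1)] sbp_dy[OF pFX(2) pd(1)]
      sbp_lap[OF pd(1) pd(1)] D_def by simp
  have ex: "gsum N (\<lambda>i j. ?Xp i j * Ax ?W i j) + 2 * gsum N (\<lambda>i j. ?FX i j * Dx h ?d i j)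
     \<ge> gsum N (\<lambda>i j. (Dx h ?p i j)^2 * Ax (\<lambda>c d. kap (?p c d)) i j)
         - gsum N (\<lambda>i j. (Dx h ?q i j)^2 * Ax (\<lambda>c d. kap (?q c d)) i j)"
    using edge_x[OF pp(1) pp(2) bp, of h] by simp
  have ey: "gsum N (\<lambda>i j. ?Yp i j * Ay ?W i j) + 2 * gsum N (\<lambda>i j. ?FY i j * Dy h ?d i j)
     \<ge> gsum N (\<lambda>i j. (Dy h ?p i j)^2 * Ay (\<lambda>c d. kap (?p c d)) i j)
         - gsum N (\<lambda>i j. (Dy h ?q i j)^2 * Ay (\<lambda>c d. kap (?q c d)) i j)"
    using edge_y[OF pp(1) pp(2) bp, of h] by simp
  let ?SHp = "\<lambda>i j. Sfun N1 N2 (?p i j) + Hfun N1 N2 chi (?p i j)"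
  let ?SHq = "\<lambda>i j. Sfun N1 N2 (?q i j) + Hfun N1 N2 chi (?q i j)"
  have eT: "gsum N ?T1 \<ge> gsum N ?SHp - gsum N ?SHq - (cS N1 N2 + chi) * gsum N ?d - k * M'"
  proof -
    have "gsum N (\<lambda>i j. ?SHp i j - ?SHq i j - (cS N1 N2 + chi) * ?d i j - chi * rho N1 N2 * (?d' i j * ?d' i j))
       \<le> gsum N ?T1"
    proof (rule gsum_mono)
      fix i j
      show "?SHp i j - ?SHq i j - (cS N1 N2 + chi) * ?d i j - chi * rho N1 N2 * (?d' i j * ?d' i j) \<le> ?T1 i j"
        using T1_point[OF N1 N2 _ conjunct1[OF bnd2[of "Suc (Suc m)" i j]] conjunct2[OF bnd2[of "Suc (Suc m)" i j]]
            conjunct1[OF bnd2[of "Suc m" i j]] conjunct2[OF bnd2[of "Suc m" i j]], of chi "?r i j"] chi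
        by simp
    qed
    then show ?thesis unfolding M'_def k_def by (simp only: gsum_diff gsum_cmult)
  qed
  define Fp where "Fp = gsum N ?SHp + gsum N (\<lambda>i j. (Dx h ?p i j)^2 * Ax (\<lambda>c d. kap (?p c d)) i j)
     + gsum N (\<lambda>i j. (Dy h ?p i j)^2 * Ay (\<lambda>c d. kap (?p c d)) i j)"
  define Fq where "Fq = gsum N ?SHq + gsum N (\<lambda>i j. (Dx h ?q i j)^2 * Ax (\<lambda>c d. kap (?q c d)) i j)
     + gsum N (\<lambda>i j. (Dy h ?q i j)^2 * Ay (\<lambda>c d. kap (?q c d)) i j)"
  have e3: "Fp - Fq - k*M' + A*dt*D \<le> Md"
  proof -
    have eT': "gsum N ?T1 \<ge> gsum N ?SHp - gsum N ?SHq - k * M'" using eT gsd by simp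
    show ?thesis using Md2 ex ey eT' unfolding Fp_def Fq_def by linarith
  qed
  have fin: "h^2*Fp + 1/(4*dt)*(h^2*P) + k*(h^2*M) + dt*(1 - k^2/A)*(h^2*P/dt^2)
       \<le> h^2*Fq + 1/(4*dt)*(h^2*P') + k*(h^2*M')"
    by (rule final_arith[OF dt _ Apos e1 e2 e3 e4]) (simp add: hne)
  have FenP: "Fen N1 N2 chi N h ?p = h^2 * Fp" unfolding Fp_def by (rule Fsplit[OF pp(1)])
  have FenQ: "Fen N1 N2 chi N h ?q = h^2 * Fq" unfolding Fq_def by (rule Fsplit[OF pp(2)])
  have LHS: "Eh N1 N2 chi N h dt ?p ?q + dt * (1 - chi^2 * (rho N1 N2)^2 / A) * normm1sq N h (\<lambda>i j. (?p i j - ?q i j) / dt)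
     = h^2*Fp + 1/(4*dt)*(h^2*P) + k*(h^2*M) + dt*(1 - k^2/A)*(h^2*P/dt^2)"
    unfolding Eh_def norm2sq_def ip_def n1 n3 FenP P_def M_def k_def by (simp add: power_mult_distrib)
  have RHS: "Eh N1 N2 chi N h dt ?q ?r = h^2*Fq + 1/(4*dt)*(h^2*P') + k*(h^2*M')"
    unfolding Eh_def norm2sq_def ip_def n2 FenQ P'_def M'_def k_def by simp
  have goal: "Eh N1 N2 chi N h dt ?p ?q + dt * (1 - chi^2 * (rho N1 N2)^2 / A) * normm1sq N h (\<lambda>i j. (?p i j - ?q i j) / dt)
     \<le> Eh N1 N2 chi N h dt ?q ?r" unfolding LHS RHS by (rule fin)
  show ?thesis unfolding nm using goal by simp
qed

end
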